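(* Let $\mathbb{R}^n_s$ be $\mathbb{R}^n$ with a non-degenerate symmetric bilinear form $\langle\cdot,\cdot\rangle$ of signature $(n-s,s)$, let $G\subset\mathrm{Iso}(\mathbb{R}^n_s)$ be a real Zariski-closed subgroup whose centralizer in $\mathrm{Iso}(\mathbb{R}^n_s)$ acts transitively on $\mathbb{R}^n$, and let $\mathfrak{g}$ be its Lie algebra with the symmetric bilinear form $(\cdot,\cdot)$ induced by the orbit metric. Then the commutator subalgebra $[\mathfrak{g},\mathfrak{g}]$ is totally isotropic with respect to $(\cdot,\cdot)$, and the center $\mathfrak{z}(\mathfrak{g})$ is orthogonal to $[\mathfrak{g},\mathfrak{g}]$.
   Context: Elements of $\mathfrak{g}$ are written $(A,v)$ (matrices $\begin{pmatrix}A&v\\0&0\end{pmatrix}$). For fixed $p\in\mathbb{R}^n$, the orbit metric form on $\mathfrak{g}$ is $(X,Y)=\langle A_Xp+v_X,\,A_Yp+v_Y\rangle$ for $X=(A_X,v_X)$, $Y=(A_Y,v_Y)$, i.e. the pullback of $\langle\cdot,\cdot\rangle$ on the orbit $G.p$ via the orbit map; it is invariant: $([X,Y],Z)=-(Y,[X,Z])$ for all $X,Y,Z\in\mathfrak{g}$. The group $G$ (and $\mathfrak{g}$) is 2-step nilpotent. *)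

theory Defs
  imports "HOL-Analysis.Analysis"
begin

text \<open>Affine maps of R^n are pairs (A, v), acting by x |-> A x + v, i.e. the matrix
  [[A, v], [0, 1]].  Elements of the Lie algebra are pairs (A, v) standing for
  the matrix [[A, v], [0, 0]].\<close>

type_synonym 'n aff = "(real^'n^'n) \<times> (real^'n)"

definition aff_apply :: "'n::finite aff \<Rightarrow> real^'n \<Rightarrow> real^'n" where
  "aff_apply g x = fst g *v x + snd g"

definition aff_comp :: "'n::finite aff \<Rightarrow> 'n aff \<Rightarrow> 'n aff" where
  "aff_comp g h = (fst g ** fst h, fst g *v snd h + snd g)"

definition aff_id :: "'n::finite aff" where
  "aff_id = (mat 1, 0)"

definition bform :: "real^'n^'n \<Rightarrow> real^'n \<Rightarrow> real^'n \<Rightarrow> real" where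
  "bform Q x y = x \<bullet> (Q *v y)"

text \<open>Q is non-degenerate symmetric (of some signature (n-s,s)).\<close>
definition nondeg_sym :: "real^'n^'n::finite \<Rightarrow> bool" where
  "nondeg_sym Q \<longleftrightarrow> transpose Q = Q \<and> invertible Q"

definition Iso :: "real^'n^'n \<Rightarrow> 'n::finite aff set" where
  "Iso Q = {g. \<forall>x y. bform Q (fst g *v x) (fst g *v y) = bform Q x y}"

definition is_subgroup :: "'n::finite aff set \<Rightarrow> 'n aff set \<Rightarrow> bool" where
  "is_subgroup G H \<longleftrightarrow> G \<subseteq> H \<and> aff_id \<in> G \<and>
     (\<forall>g\<in>G. \<forall>h\<in>G. aff_comp g h \<in> G) \<and>
     (\<forall>g\<in>G. \<exists>h\<in>G. aff_comp g h = aff_id \<and> aff_comp h g = aff_id)"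

inductive_set poly_funs :: "('n::finite aff \<Rightarrow> real) set" where
  const: "(\<lambda>_. c) \<in> poly_funs"
| coordA: "(\<lambda>g. fst g $ i $ j) \<in> poly_funs"
| coordv: "(\<lambda>g. snd g $ i) \<in> poly_funs"
| add: "f \<in> poly_funs \<Longrightarrow> h \<in> poly_funs \<Longrightarrow> (\<lambda>g. f g + h g) \<in> poly_funs"
| mult: "f \<in> poly_funs \<Longrightarrow> h \<in> poly_funs \<Longrightarrow> (\<lambda>g. f g * h g) \<in> poly_funs"

definition zariski_closed :: "'n::finite aff set \<Rightarrow> bool" where
  "zariski_closed G \<longleftrightarrow> (\<exists>F \<subseteq> poly_funs. G = {g. \<forall>f\<in>F. f g = 0})"

definition centralizer :: "'n::finite aff set \<Rightarrow> 'n aff set \<Rightarrow> 'n aff set" where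
  "centralizer H G = {h \<in> H. \<forall>g\<in>G. aff_comp h g = aff_comp g h}"

definition transitive_on_Rn :: "'n::finite aff set \<Rightarrow> bool" where
  "transitive_on_Rn C \<longleftrightarrow> (\<forall>x y. \<exists>h\<in>C. aff_apply h x = y)"

definition lie_alg :: "'n::finite aff set \<Rightarrow> 'n aff set" where
  "lie_alg G = {X. \<exists>c. (\<forall>t. c t \<in> G) \<and> c 0 = aff_id \<and> (c has_vector_derivative X) (at 0)}"

text \<open>Commutator of [[A,v],[0,0]] and [[B,w],[0,0]].\<close>
definition lie_bracket :: "'n::finite aff \<Rightarrow> 'n aff \<Rightarrow> 'n aff" where
  "lie_bracket X Y = (fst X ** fst Y - fst Y ** fst X, fst X *v snd Y - fst Y *v snd X)"

definition orbit_form :: "real^'n^'n \<Rightarrow> real^'n \<Rightarrow> 'n::finite aff \<Rightarrow> 'n aff \<Rightarrow> real" where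
  "orbit_form Q p X Y = bform Q (fst X *v p + snd X) (fst Y *v p + snd Y)"

definition derived_alg :: "'n::finite aff set \<Rightarrow> 'n aff set" where
  "derived_alg L = span {lie_bracket X Y | X Y. X \<in> L \<and> Y \<in> L}"

definition lie_center :: "'n::finite aff set \<Rightarrow> 'n aff set" where
  "lie_center L = {Z \<in> L. \<forall>X\<in>L. lie_bracket Z X = 0}"

end

theory Submission
  imports Defs
begin

lemma mv_neg[simp]: "A *v (- x) = - (A *v (x::real^'n::finite))"
  using matrix_vector_mult_diff_distrib[of A 0 x] by simp

lemma mv_smul: "(c *\<^sub>R A) *v x = c *\<^sub>R (A *v (x::real^'n::finite))"
  by (simp add: scaleR_matrix_vector_assoc)

lemma mm_add_r: "((A::real^'n::finite^'m::finite) + B) ** (C::real^'k::finite^'n) = A ** C + B ** C"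
  by (simp add: matrix_matrix_mult_def vec_eq_iff sum.distrib distrib_right)
lemma mm_add_l: "(C::real^'n::finite^'m::finite) ** (A + (B::real^'k::finite^'n)) = C ** A + C ** B"
  by (simp add: matrix_matrix_mult_def vec_eq_iff sum.distrib distrib_left)
lemma mm_sc_r: "(c *\<^sub>R (A::real^'n::finite^'m::finite)) ** (C::real^'k::finite^'n) = c *\<^sub>R (A ** C)"
  by (simp add: matrix_matrix_mult_def vec_eq_iff sum_distrib_left mult.assoc)
lemma mm_sc_l: "(C::real^'n::finite^'m::finite) ** (c *\<^sub>R (A::real^'k::finite^'n)) = c *\<^sub>R (C ** A)"
  by (simp add: matrix_matrix_mult_def vec_eq_iff sum_distrib_left mult.left_commute)

lemma bform_sym: "transpose Q = Q \<Longrightarrow> bform Q x y = bform Q y x"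
  unfolding bform_def
  by (metis dot_lmul_matrix inner_commute transpose_matrix_vector)

lemma bform_add_left: "bform Q (x + z) y = bform Q x y + bform Q z y"
  by (simp add: bform_def inner_add_left)
lemma bform_add_right: "bform Q x (y + z) = bform Q x y + bform Q x z"
  by (simp add: bform_def matrix_vector_right_distrib inner_add_right)
lemma bform_diff_left: "bform Q (x - z) y = bform Q x y - bform Q z y"
  by (simp add: bform_def inner_diff_left)
lemma bform_diff_right: "bform Q x (y - z) = bform Q x y - bform Q x z"
  by (simp add: bform_def matrix_vector_mult_diff_distrib inner_diff_right)
lemma bform_scale_left: "bform Q (a *\<^sub>R x) y = a * bform Q x y"
  by (simp add: bform_def)
lemma bform_scale_right: "bform Q x (a *\<^sub>R y) = a * bform Q x y"
  by (simp add: bform_def matrix_vector_mult_scaleR)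
lemma bform_neg_left: "bform Q (- x) y = - bform Q x y"
  by (simp add: bform_def)
lemma bform_neg_right: "bform Q x (- y) = - bform Q x y"
  by (simp add: bform_def)

lemmas bform_simps = bform_add_left bform_add_right bform_diff_left bform_diff_right
  bform_scale_left bform_scale_right bform_neg_left bform_neg_right

lemma bform_nondeg:
  assumes "invertible Q" "\<And>q. bform Q q z = 0" shows "z = 0"
proof -
  have "(Q *v z) \<bullet> (Q *v z) = 0" using assms(2)[of "Q *v z"] by (simp add: bform_def)
  hence "Q *v z = 0" by simp
  thus ?thesis using assms(1) 
    by (metis invertible_def matrix_vector_mul_assoc matrix_vector_mul_lid matrix_vector_mult_0_right)
qed

lemma bilinear_bform: "bilinear (bform Q)"
  unfolding bilinear_def
  by (auto intro!: linearI simp: bform_add_left bform_add_right bform_scale_left bform_scale_right)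

lemma deriv_const_zero:
  fixes \<phi> :: "'n::finite aff \<Rightarrow> 'b::real_normed_vector"
  assumes "(c has_vector_derivative X) (at 0)" "\<And>t. \<phi> (c t) = k"
    "(\<phi> has_derivative \<phi>') (at (c 0))"
  shows "\<phi>' X = 0"
proof -
  have c: "(c has_derivative (\<lambda>t. t *\<^sub>R X)) (at 0)"
    using assms(1) by (simp add: has_vector_derivative_def)
  have "((\<lambda>t. \<phi> (c t)) has_derivative (\<lambda>t. \<phi>' (t *\<^sub>R X))) (at 0)"
    using has_derivative_compose[OF c assms(3)] by simp
  moreover have "((\<lambda>t. \<phi> (c t)) has_derivative (\<lambda>t. 0)) (at (0::real))"
    using assms(2) by simp
  ultimately have "(\<lambda>t. \<phi>' (t *\<^sub>R X)) = (\<lambda>t. 0)" by (rule has_derivative_unique)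
  from fun_cong[OF this, of 1] show ?thesis by simp
qed

definition KK :: "real^'n^'n \<Rightarrow> 'n::finite aff set \<Rightarrow> 'n aff set" where
  "KK Q G = {X. (\<forall>x y. bform Q (fst X *v x) y = - bform Q x (fst X *v y)) \<and>
     (\<forall>h\<in>centralizer (Iso Q) G. (\<forall>x. fst h *v (fst X *v x) = fst X *v (fst h *v x))
        \<and> fst h *v snd X = fst X *v snd h + snd X)}"

lemma lin_has_deriv:
  fixes f :: "'n::finite aff \<Rightarrow> 'b::euclidean_space"
  assumes "linear f" shows "(f has_derivative f) F"
  using assms bounded_linear_imp_has_derivative linear_conv_bounded_linear by blast

lemma lie_in_KK:
  assumes sg: "is_subgroup G (Iso Q)" and X: "X \<in> lie_alg G"
  shows "X \<in> KK Q G"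
proof -
  obtain c where cG: "\<And>t. c t \<in> G" and c0: "c 0 = aff_id"
    and cd: "(c has_vector_derivative X) (at 0)"
    using X unfolding lie_alg_def by blast
  have cI: "c t \<in> Iso Q" for t using cG sg unfolding is_subgroup_def by blast
  have skew: "bform Q (fst X *v x) y = - bform Q x (fst X *v y)" for x y
  proof -
    have l1: "linear (\<lambda>g::'a aff. fst g *v x)" for x
      by (intro linearI) (auto simp: matrix_vector_mult_add_rdistrib mv_smul)
    have d: "((\<lambda>g::'a aff. bform Q (fst g *v x) (fst g *v y)) has_derivative
       (\<lambda>h. bform Q (fst (c 0) *v x) (fst h *v y) + bform Q (fst h *v x) (fst (c 0) *v y))) (at (c 0))"
      using bounded_bilinear.FDERIV[OF bilinear_bform[unfolded bilinear_conv_bounded_bilinear],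
          OF lin_has_deriv[OF l1[of x]] lin_has_deriv[OF l1[of y]]] by simp
    have "bform Q (fst (c 0) *v x) (fst X *v y) + bform Q (fst X *v x) (fst (c 0) *v y) = 0"
      by (rule deriv_const_zero[OF cd _ d, where k="bform Q x y"]) (use cI in \<open>auto simp: Iso_def\<close>)
    thus ?thesis using c0 by (simp add: aff_id_def)
  qed
  have comm: "(\<forall>x. fst h *v (fst X *v x) = fst X *v (fst h *v x))
        \<and> fst h *v snd X = fst X *v snd h + snd X" if h: "h \<in> centralizer (Iso Q) G" for h
  proof -
    have hc: "aff_comp h (c t) = aff_comp (c t) h" for t
      using h cG unfolding centralizer_def by blast
    have l1: "linear (\<lambda>g::'a aff. fst h ** fst g - fst g ** fst h)"
      by (intro linearI) (auto simp: mm_add_r mm_add_l mm_sc_r mm_sc_l algebra_simps)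
    have e1: "fst h ** fst X - fst X ** fst h = 0"
      by (rule deriv_const_zero[OF cd _ lin_has_deriv[OF l1], where k=0])
         (use hc in \<open>auto simp: aff_comp_def prod_eq_iff\<close>)
    have l2: "linear (\<lambda>g::'a aff. fst h *v snd g - fst g *v snd h - snd g)"
      by (intro linearI) (auto simp: matrix_vector_mult_add_rdistrib mv_smul algebra_simps)
    have d2: "((\<lambda>g::'a aff. fst h *v snd g - fst g *v snd h - snd g + snd h) has_derivative
        (\<lambda>g::'a aff. fst h *v snd g - fst g *v snd h - snd g)) (at (c 0))"
      using lin_has_deriv[OF l2] by (intro has_derivative_add_const)
    have e2: "fst h *v snd X - fst X *v snd h - snd X = 0"
      by (rule deriv_const_zero[OF cd _ d2, where k=0])
         (use hc in \<open>auto simp: aff_comp_def prod_eq_iff algebra_simps\<close>)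
    have e2': "fst h *v snd X = fst X *v snd h + snd X"
    proof -
      have "fst h *v snd X = (fst h *v snd X - fst X *v snd h - snd X) + (fst X *v snd h + snd X)"
        by (simp add: algebra_simps)
      thus ?thesis using e2 by simp
    qed
    show ?thesis using e1 e2' by (auto simp: matrix_vector_mul_assoc)
  qed
  show ?thesis unfolding KK_def using skew comm by blast
qed

lemma KK_const:
  assumes tr: "transitive_on_Rn (centralizer (Iso Q) G)"
    and X: "X \<in> KK Q G" and Y: "Y \<in> KK Q G"
  shows "bform Q (fst X *v q + snd X) (fst Y *v q + snd Y) = bform Q (snd X) (snd Y)"
proof -
  obtain h where h: "h \<in> centralizer (Iso Q) G" and hq: "aff_apply h 0 = q"
    using tr unfolding transitive_on_Rn_def by blast
  have q: "snd h = q" using hq by (simp add: aff_apply_def)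
  have hI: "h \<in> Iso Q" using h by (simp add: centralizer_def)
  have "fst h *v snd X = fst X *v snd h + snd X" using X h unfolding KK_def by blast
  hence 1: "fst X *v q + snd X = fst h *v snd X" using q by simp
  have "fst h *v snd Y = fst Y *v snd h + snd Y" using Y h unfolding KK_def by blast
  hence 2: "fst Y *v q + snd Y = fst h *v snd Y" using q by simp
  have "bform Q (fst h *v snd X) (fst h *v snd Y) = bform Q (snd X) (snd Y)"
    using hI unfolding Iso_def by blast
  thus ?thesis using 1 2 by simp
qed

lemma KK_skew:
  assumes "X \<in> KK Q G" shows "bform Q (fst X *v x) y = - bform Q x (fst X *v y)"
  using assms unfolding KK_def by blast

lemma KK_anti:
  assumes nd: "nondeg_sym Q" and tr: "transitive_on_Rn (centralizer (Iso Q) G)"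
    and X: "X \<in> KK Q G" and Y: "Y \<in> KK Q G"
  shows "fst X *v (fst Y *v q) = - (fst Y *v (fst X *v q))"
    and "fst X *v snd Y = - (fst Y *v snd X)"
proof -
  have sym: "transpose Q = Q" and inv: "invertible Q" using nd by (auto simp: nondeg_sym_def)
  define A where "A = fst X"
  define B where "B = fst Y"
  define u where "u = snd X"
  define w where "w = snd Y"
  have c: "bform Q (A *v r + u) (B *v r + w) = bform Q u w" for r
    using KK_const[OF tr X Y] unfolding A_def B_def u_def w_def .
  have both: "bform Q (A *v r) (B *v r) = 0 \<and> bform Q (A *v r) w + bform Q u (B *v r) = 0" for r
  proof -
    have 1: "bform Q (A *v r) (B *v r) + bform Q (A *v r) w + bform Q u (B *v r) = 0"
      using c[of r] by (simp add: bform_simps)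
    have 2: "bform Q (A *v r) (B *v r) - bform Q (A *v r) w - bform Q u (B *v r) = 0"
      using c[of "-r"] by (simp add: bform_simps)
    from 1 2 show ?thesis by linarith
  qed
  have skA: "bform Q (A *v x) y = - bform Q x (A *v y)" for x y
    using KK_skew[OF X] A_def by simp
  have skB: "bform Q (B *v x) y = - bform Q x (B *v y)" for x y
    using KK_skew[OF Y] B_def by simp
  have "A *v (B *v q) + B *v (A *v q) = 0"
  proof (rule bform_nondeg[OF inv])
    fix r
    have "bform Q (A *v (r + q)) (B *v (r + q)) = 0" using both by blast
    hence "bform Q (A *v r) (B *v q) + bform Q (A *v q) (B *v r) = 0"
      using both[of r] both[of q] by (simp add: bform_simps matrix_vector_right_distrib)
    moreover have "bform Q (A *v r) (B *v q) = - bform Q r (A *v (B *v q))" by (rule skA)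
    moreover have "bform Q (A *v q) (B *v r) = - bform Q r (B *v (A *v q))"
      using skB[of r "A *v q"] bform_sym[OF sym, of "A *v q" "B *v r"] by simp
    ultimately show "bform Q r (A *v (B *v q) + B *v (A *v q)) = 0"
      by (simp add: bform_simps)
  qed
  thus "fst X *v (fst Y *v q) = - (fst Y *v (fst X *v q))"
    unfolding A_def B_def by (simp add: eq_neg_iff_add_eq_0)
  have "A *v w + B *v u = 0"
  proof (rule bform_nondeg[OF inv])
    fix r
    have "bform Q (A *v r) w + bform Q u (B *v r) = 0" using both by blast
    moreover have "bform Q (A *v r) w = - bform Q r (A *v w)" by (rule skA)
    moreover have "bform Q u (B *v r) = - bform Q r (B *v u)"
      using skB[of r u] bform_sym[OF sym, of u "B *v r"] by simp
    ultimately show "bform Q r (A *v w + B *v u) = 0"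
      by (simp add: bform_simps)
  qed
  thus "fst X *v snd Y = - (fst Y *v snd X)"
    unfolding A_def B_def u_def w_def by (simp add: eq_neg_iff_add_eq_0)
qed

lemma bracket_mv: "fst (lie_bracket X Y) *v q = fst X *v (fst Y *v q) - fst Y *v (fst X *v q)"
  by (simp add: lie_bracket_def matrix_vector_mult_diff_rdistrib matrix_vector_mul_assoc)

lemma KK_bracket:
  assumes X: "X \<in> KK Q G" and Y: "Y \<in> KK Q G"
  shows "lie_bracket X Y \<in> KK Q G"
proof -
  have sk: "bform Q (fst (lie_bracket X Y) *v x) y = - bform Q x (fst (lie_bracket X Y) *v y)" for x y
  proof -
    have "bform Q (fst (lie_bracket X Y) *v x) y
       = bform Q (fst X *v (fst Y *v x)) y - bform Q (fst Y *v (fst X *v x)) y"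
      by (simp add: bracket_mv bform_diff_left)
    also have "\<dots> = - bform Q (fst Y *v x) (fst X *v y) + bform Q (fst X *v x) (fst Y *v y)"
      using KK_skew[OF X, of "fst Y *v x" y] KK_skew[OF Y, of "fst X *v x" y] by simp
    also have "\<dots> = bform Q x (fst Y *v (fst X *v y)) - bform Q x (fst X *v (fst Y *v y))"
      using KK_skew[OF Y, of x "fst X *v y"] KK_skew[OF X, of x "fst Y *v y"] by simp
    also have "\<dots> = - bform Q x (fst (lie_bracket X Y) *v y)"
      by (simp add: bracket_mv bform_diff_right)
    finally show ?thesis .
  qed
  have cm: "(\<forall>x. fst h *v (fst (lie_bracket X Y) *v x) = fst (lie_bracket X Y) *v (fst h *v x))
        \<and> fst h *v snd (lie_bracket X Y) = fst (lie_bracket X Y) *v snd h + snd (lie_bracket X Y)"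
    if h: "h \<in> centralizer (Iso Q) G" for h
  proof -
    have hx: "fst h *v (fst X *v x) = fst X *v (fst h *v x)" "fst h *v snd X = fst X *v snd h + snd X"
      and hy: "fst h *v (fst Y *v x) = fst Y *v (fst h *v x)" "fst h *v snd Y = fst Y *v snd h + snd Y"
      for x using X Y h unfolding KK_def by blast+
    have g1: "fst h *v (fst (lie_bracket X Y) *v x) = fst (lie_bracket X Y) *v (fst h *v x)" for x
      by (simp add: bracket_mv matrix_vector_mult_diff_distrib hx hy)
    have "fst h *v snd (lie_bracket X Y) = fst h *v (fst X *v snd Y) - fst h *v (fst Y *v snd X)"
      by (simp add: lie_bracket_def matrix_vector_mult_diff_distrib)
    also have "\<dots> = fst X *v (fst Y *v snd h) + fst X *v snd Y - (fst Y *v (fst X *v snd h) + fst Y *v snd X)"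
      by (simp add: hx hy matrix_vector_right_distrib)
    also have "\<dots> = fst (lie_bracket X Y) *v snd h + snd (lie_bracket X Y)"
      using bracket_mv[of X Y "snd h"] by (simp add: lie_bracket_def)
    finally show ?thesis using g1 by blast
  qed
  show ?thesis unfolding KK_def using sk cm by blast
qed


lemma dbl0: fixes t :: "'a::real_vector" assumes "t + t = - (t + t)" shows "t = 0"
proof -
  have "(t + t) + (t + t) = 0" using assms by (metis eq_neg_iff_add_eq_0)
  hence "(2::real) *\<^sub>R ((2::real) *\<^sub>R t) = 0" by (simp only: scaleR_2)
  thus ?thesis by simp
qed

lemma self_neg0: fixes a :: "'a::real_vector" assumes "a = - a" shows "a = 0"
proof -
  have "a + a = 0" using assms by (metis eq_neg_iff_add_eq_0)
  hence "(2::real) *\<^sub>R a = 0" by (simp only: scaleR_2)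
  thus ?thesis by simp
qed

lemma KK_nil:
  assumes nd: "nondeg_sym Q" and tr: "transitive_on_Rn (centralizer (Iso Q) G)"
    and X: "X \<in> KK Q G" and Y: "Y \<in> KK Q G" and Z: "Z \<in> KK Q G"
  shows "fst X *v (fst (lie_bracket Y Z) *v q) = 0" and "fst X *v snd (lie_bracket Y Z) = 0"
proof -
  define W where "W = lie_bracket Y Z"
  have W: "W \<in> KK Q G" unfolding W_def by (rule KK_bracket[OF Y Z])
  note an = KK_anti[OF nd tr]
  define t where "t = fst X *v (fst Y *v (fst Z *v q))"
  have aW: "fst W *v r = fst Y *v (fst Z *v r) + fst Y *v (fst Z *v r)" for r
    using an(1)[OF Z Y, of r] by (simp add: W_def bracket_mv)
  have 1: "fst X *v (fst W *v q) = t + t"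
    unfolding aW t_def by (rule matrix_vector_right_distrib)
  have "fst Y *v (fst Z *v (fst X *v q)) = t"
    using an(1)[OF Z X, of q] an(1)[OF Y X, of "fst Z *v q"] by (simp add: t_def)
  hence 2: "fst W *v (fst X *v q) = t + t" by (simp add: aW)
  have "t + t = - (t + t)" using an(1)[OF X W, of q] 1 2 by simp
  hence "t = 0" by (rule dbl0)
  thus "fst X *v (fst (lie_bracket Y Z) *v q) = 0" using 1 W_def by simp
  define s where "s = fst X *v (fst Y *v snd Z)"
  have vW: "snd W = fst Y *v snd Z + fst Y *v snd Z"
    using an(2)[OF Z Y] by (simp add: W_def lie_bracket_def)
  have 3: "fst X *v snd W = s + s" unfolding vW s_def by (rule matrix_vector_right_distrib)
  have "fst Y *v (fst Z *v snd X) = s"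
    using an(2)[OF Z X] an(1)[OF Y X, of "snd Z"] by (simp add: s_def)
  hence 4: "fst W *v snd X = s + s" by (simp add: aW)
  have "s + s = - (s + s)" using an(2)[OF X W] 3 4 by simp
  hence "s = 0" by (rule dbl0)
  thus "fst X *v snd (lie_bracket Y Z) = 0" using 3 W_def by simp
qed

lemma KK_orbit_bracket:
  assumes nd: "nondeg_sym Q" and tr: "transitive_on_Rn (centralizer (Iso Q) G)"
    and X: "X \<in> KK Q G" and Y: "Y \<in> KK Q G"
  shows "fst (lie_bracket X Y) *v p + snd (lie_bracket X Y)
     = fst X *v (fst Y *v p + snd Y) + fst X *v (fst Y *v p + snd Y)"
proof -
  have e1: "fst (lie_bracket X Y) *v p = fst X *v (fst Y *v p) + fst X *v (fst Y *v p)"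
    using KK_anti(1)[OF nd tr Y X, of p] by (simp add: bracket_mv)
  have e2: "snd (lie_bracket X Y) = fst X *v snd Y + fst X *v snd Y"
    using KK_anti(2)[OF nd tr Y X] by (simp add: lie_bracket_def)
  show ?thesis unfolding e1 e2 by (simp only: matrix_vector_right_distrib) (simp add: algebra_simps)
qed

lemma ev_add: "fst (X + Y) *v p + snd (X + Y) = (fst X *v p + snd X) + (fst Y *v (p::real^'n::finite) + snd Y)"
  by (simp add: matrix_vector_mult_add_rdistrib algebra_simps)
lemma ev_scale: "fst (c *\<^sub>R X) *v p + snd (c *\<^sub>R X) = c *\<^sub>R (fst X *v (p::real^'n::finite) + snd X)"
  by (simp only: fst_scaleR snd_scaleR mv_smul scaleR_right_distrib)
lemma ev_zero: "fst (0::'n::finite aff) *v p + snd (0::'n aff) = 0"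
  by simp
lemma bform_zero_left[simp]: "bform Q 0 y = 0" by (simp add: bform_def)
lemma bform_zero_right[simp]: "bform Q x 0 = 0" by (simp add: bform_def)

lemma orbit_add1: "orbit_form Q p (x + y) Y = orbit_form Q p x Y + orbit_form Q p y Y"
  by (simp only: orbit_form_def ev_add bform_add_left)
lemma orbit_sc1: "orbit_form Q p (c *\<^sub>R x) Y = c * orbit_form Q p x Y"
  by (simp only: orbit_form_def ev_scale bform_scale_left)
lemma orbit_add2: "orbit_form Q p X (x + y) = orbit_form Q p X x + orbit_form Q p X y"
  by (simp only: orbit_form_def ev_add bform_add_right)
lemma orbit_sc2: "orbit_form Q p X (c *\<^sub>R x) = c * orbit_form Q p X x"
  by (simp only: orbit_form_def ev_scale bform_scale_right)

lemma subspace_orbit1: "subspace {X. orbit_form Q p X Y = 0}"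
  unfolding subspace_def
proof (intro conjI ballI allI)
  show "0 \<in> {X. orbit_form Q p X Y = 0}" by (simp add: orbit_form_def)
  fix x y assume "x \<in> {X. orbit_form Q p X Y = 0}" "y \<in> {X. orbit_form Q p X Y = 0}"
  thus "x + y \<in> {X. orbit_form Q p X Y = 0}"
    by (simp add: orbit_add1)
next
  fix c x assume "x \<in> {X. orbit_form Q p X Y = 0}"
  thus "c *\<^sub>R x \<in> {X. orbit_form Q p X Y = 0}"
    by (simp add: orbit_sc1)
qed

lemma subspace_orbit2: "subspace {Y. orbit_form Q p X Y = 0}"
  unfolding subspace_def
proof (intro conjI ballI allI)
  show "0 \<in> {Y. orbit_form Q p X Y = 0}" by (simp add: orbit_form_def)
  fix x y assume "x \<in> {Y. orbit_form Q p X Y = 0}" "y \<in> {Y. orbit_form Q p X Y = 0}"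
  thus "x + y \<in> {Y. orbit_form Q p X Y = 0}"
    by (simp add: orbit_add2)
next
  fix c x assume "x \<in> {Y. orbit_form Q p X Y = 0}"
  thus "c *\<^sub>R x \<in> {Y. orbit_form Q p X Y = 0}"
    by (simp add: orbit_sc2)
qed

lemma subspace_N: "subspace {W. (\<forall>q. (A::real^'n::finite^'n)  *v (fst W *v q) = 0) \<and> A *v snd W = 0}"
  unfolding subspace_def
  by (simp only: mem_Collect_eq fst_add snd_add fst_scaleR snd_scaleR mv_smul matrix_vector_mult_add_rdistrib
     matrix_vector_right_distrib matrix_vector_mult_scaleR fst_zero snd_zero matrix_vector_mult_0
     matrix_vector_mult_0_right) simp

theorem lemma4p7:
  fixes Q :: "real^'n^'n" and G :: "'n::finite aff set" and p :: "real^'n"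
  assumes "nondeg_sym Q"
    and "is_subgroup G (Iso Q)"
    and "zariski_closed G"
    and "transitive_on_Rn (centralizer (Iso Q) G)"
  shows "(\<forall>X\<in>derived_alg (lie_alg G). \<forall>Y\<in>derived_alg (lie_alg G). orbit_form Q p X Y = 0)
       \<and> (\<forall>Z\<in>lie_center (lie_alg G). \<forall>Y\<in>derived_alg (lie_alg G). orbit_form Q p Z Y = 0)"
proof -
  note nd = assms(1) and tr = assms(4)
  have sym: "transpose Q = Q" using nd by (simp add: nondeg_sym_def)
  have LK: "X \<in> KK Q G" if "X \<in> lie_alg G" for X using lie_in_KK[OF assms(2) that] .
  have N: "(\<forall>q. fst X *v (fst W *v q) = 0) \<and> fst X *v snd W = 0"
    if X: "X \<in> lie_alg G" and W: "W \<in> derived_alg (lie_alg G)" for X W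
  proof -
    have "W \<in> {W. (\<forall>q. fst X *v (fst W *v q) = 0) \<and> fst X *v snd W = 0}"
      using W unfolding derived_alg_def
    proof (induct rule: span_induct)
      case base show ?case unfolding Collect_mem_eq by (rule subspace_N)
    next
      case (step W)
      then obtain Y Z where W: "W = lie_bracket Y Z" "Y \<in> lie_alg G" "Z \<in> lie_alg G" by blast
      show ?case using KK_nil[OF nd tr LK[OF X] LK[OF W(2)] LK[OF W(3)]] W(1) by simp
    qed
    thus ?thesis by simp
  qed
  have G1: "orbit_form Q p X' Y' = 0"
    if X': "X' \<in> derived_alg (lie_alg G)" and Y': "Y' \<in> derived_alg (lie_alg G)" for X' Y'
  proof -
    have "X' \<in> {X. orbit_form Q p X Y' = 0}"
      using X' unfolding derived_alg_def
    proof (induct rule: span_induct)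
      case base show ?case unfolding Collect_mem_eq by (rule subspace_orbit1)
    next
      case (step W)
      then obtain X Y where W: "W = lie_bracket X Y" "X \<in> lie_alg G" "Y \<in> lie_alg G" by blast
      define s where "s = fst Y *v p + snd Y"
      have "fst X *v (fst Y' *v p + snd Y') = 0"
        using N[OF W(2) Y'] by (simp add: matrix_vector_right_distrib)
      moreover have "bform Q (fst X *v s) (fst Y' *v p + snd Y') = - bform Q s (fst X *v (fst Y' *v p + snd Y'))"
        using KK_skew[OF LK[OF W(2)]] .
      ultimately have h0: "bform Q (fst X *v s) (fst Y' *v p + snd Y') = 0" by (simp add: bform_def)
      have ob: "fst W *v p + snd W = fst X *v s + fst X *v s"
        unfolding W(1) s_def by (rule KK_orbit_bracket[OF nd tr LK[OF W(2)] LK[OF W(3)]])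
      show ?case unfolding mem_Collect_eq orbit_form_def ob unfolding bform_add_left using h0 by simp
    qed
    thus ?thesis by simp
  qed
  have G2: "orbit_form Q p Z Y' = 0"
    if Z: "Z \<in> lie_center (lie_alg G)" and Y': "Y' \<in> derived_alg (lie_alg G)" for Z Y'
  proof -
    have ZL: "Z \<in> lie_alg G" using Z by (simp add: lie_center_def)
    have Zc: "lie_bracket Z X = 0" if "X \<in> lie_alg G" for X
      using Z that by (simp add: lie_center_def)
    have "Y' \<in> {Y. orbit_form Q p Z Y = 0}"
      using Y' unfolding derived_alg_def
    proof (induct rule: span_induct)
      case base show ?case unfolding Collect_mem_eq by (rule subspace_orbit2)
    next
      case (step W)
      then obtain X Y where W: "W = lie_bracket X Y" "X \<in> lie_alg G" "Y \<in> lie_alg G" by blast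
      have zx: "lie_bracket Z X = 0" by (rule Zc[OF W(2)])
      have m: "fst X *v (fst Z *v q) = 0" for q
      proof -
        have "fst (lie_bracket Z X) *v q = 0" using zx by simp
        hence e: "fst Z *v (fst X *v q) = fst X *v (fst Z *v q)" by (simp add: bracket_mv)
        have f: "fst X *v (fst Z *v q) = - (fst Z *v (fst X *v q))"
          by (rule KK_anti(1)[OF nd tr LK[OF W(2)] LK[OF ZL]])
        from f have "fst X *v (fst Z *v q) = - (fst X *v (fst Z *v q))" unfolding e .
        thus ?thesis by (rule self_neg0)
      qed
      have v: "fst X *v snd Z = 0"
      proof -
        have "snd (lie_bracket Z X) = 0" using zx by simp
        hence e: "fst Z *v snd X = fst X *v snd Z" by (simp add: lie_bracket_def)
        have f: "fst X *v snd Z = - (fst Z *v snd X)"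
          by (rule KK_anti(2)[OF nd tr LK[OF W(2)] LK[OF ZL]])
        from f have "fst X *v snd Z = - (fst X *v snd Z)" unfolding e .
        thus ?thesis by (rule self_neg0)
      qed
      define s where "s = fst Y *v p + snd Y"
      have "fst X *v (fst Z *v p + snd Z) = 0"
        using m v by (simp add: matrix_vector_right_distrib)
      moreover have "bform Q (fst X *v s) (fst Z *v p + snd Z) = - bform Q s (fst X *v (fst Z *v p + snd Z))"
        using KK_skew[OF LK[OF W(2)]] .
      ultimately have "bform Q (fst X *v s) (fst Z *v p + snd Z) = 0" by (simp add: bform_def)
      hence h0: "bform Q (fst Z *v p + snd Z) (fst X *v s) = 0" using bform_sym[OF sym] by simp
      have ob: "fst W *v p + snd W = fst X *v s + fst X *v s"
        unfolding W(1) s_def by (rule KK_orbit_bracket[OF nd tr LK[OF W(2)] LK[OF W(3)]])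
      show ?case unfolding mem_Collect_eq orbit_form_def ob unfolding bform_add_right using h0 by simp
    qed
    thus ?thesis by simp
  qed
  show ?thesis using G1 G2 by blast
qed

end
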